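(* There is a constant $C > 0$ such that for any $n \ge 2$ and any $p \in \mathcal{P}_n$, $$\max_{|\theta| \le n^{-2/5}} |p(e^{i \theta})| \ge \exp(-Cn^{1/5}\log^5 n).$$
   Context: $\mathcal{P}_n$ is the set of all polynomials $p(z) = 1-\sigma z^d+\sum_{j = n^{1/5}}^n c_j z^j \in \mathbb{C}[z]$ with $1 \le d < n^{1/5}$ an integer, $\sigma \in \{0,1\}$, and complex coefficients satisfying $|c_j| \le 1$ for each $j$ (the sum runs over integers $j$ with $n^{1/5} \le j \le n$; floor functions are omitted). $\log$ is the natural logarithm. *)

theory Defs
  imports "HOL-Analysis.Analysis" "HOL-Computational_Algebra.Polynomial"
begin

definition Pn :: "nat \<Rightarrow> complex poly set" where
  "Pn n = {p. \<exists>(d::nat) (\<sigma>::nat) (c::nat \<Rightarrow> complex).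
      1 \<le> d \<and> real d < real n powr (1/5) \<and> \<sigma> \<in> {0, 1} \<and>
      (\<forall>j. cmod (c j) \<le> 1) \<and>
      p = 1 - monom (of_nat \<sigma>) d
            + (\<Sum>j\<in>{j. real n powr (1/5) \<le> real j \<and> j \<le> n}. monom (c j) j)}"

end

theory Submission
  imports Defs "HOL-Complex_Analysis.Complex_Analysis"
begin

lemma denom_nz:
  fixes r :: real and z :: complex
  assumes "0 \<le> r" "r < 1" "norm z \<le> 1"
  shows "1 + of_real r * z \<noteq> 0"
proof
  assume "1 + of_real r * z = 0"
  then have "norm (of_real r * z) = 1" by (metis add.commute add_eq_0_iff norm_minus_cancel norm_one)
  moreover have "norm (of_real r * z) \<le> r" using assms by (simp add: norm_mult mult_left_le)
  ultimately show False using assms by simp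
qed

lemma mob_norm:
  fixes r :: real and v :: complex
  assumes "0 \<le> r" "r < 1" "norm v = 1"
  shows "norm ((v + of_real r) / (1 + of_real r * v)) = 1"
proof -
  have "1 + of_real r * v = v * cnj (v + of_real r)"
    using assms(3) by (simp add: algebra_simps complex_norm_square[symmetric] ) 
  then have "norm (1 + of_real r * v) = norm v * norm (cnj (v + of_real r))"
    by (simp only: norm_mult)
  then have "norm (1 + of_real r * v) = norm (v + of_real r)"
    using assms(3) by (simp only: complex_mod_cnj mult_1)
  moreover have "1 + of_real r * v \<noteq> 0" using denom_nz assms by simp
  ultimately show ?thesis by (metis norm_divide norm_eq_zero divide_self)
qed

lemma mob_Re:
  fixes r :: real and v :: complex
  assumes "0 \<le> r" "r < 1" "norm v = 1"
  shows "Re ((v + of_real r) / (1 + of_real r * v)) = ((1 + r^2) * Re v + 2*r) / (1 + 2*r*Re v + r^2)"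
proof -
  have n: "(Re v)^2 + (Im v)^2 = 1" using assms(3) by (metis cmod_power2 power_one)
  have "Re ((v + of_real r) / (1 + of_real r * v)) =
     ((Re v + r) * (1 + r * Re v) + Im v * (r * Im v)) / ((1 + r * Re v)^2 + (r * Im v)^2)"
    by (simp add: Re_divide)
  also have "(Re v + r) * (1 + r * Re v) + Im v * (r * Im v) = (1 + r^2) * Re v + 2*r"
    using n by algebra
  also have "(1 + r * Re v)^2 + (r * Im v)^2 = 1 + 2*r*Re v + r^2"
    using n by algebra
  finally show ?thesis .
qed

lemma mob_cover:
  fixes r c \<delta> :: real and v :: complex
  assumes "0 \<le> r" "r < 1" "norm v = 1" "Re v \<ge> 1 - \<delta>" "c \<le> 1" "0 \<le> \<delta>"
    and key: "\<delta> * ((1 - r)^2 + 2 * r * (1 - c)) \<le> (1 - c) * (1 + r)^2"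
  shows "Re ((v + of_real r) / (1 + of_real r * v)) \<ge> c"
proof -
  have D: "1 + 2*r*Re v + r^2 > 0"
  proof -
    have "\<bar>Re v\<bar> \<le> 1" using assms(3) abs_Re_le_cmod by metis
    then have "Re v \<ge> -1" by linarith
    then have "r * Re v \<ge> r * (-1)" using assms(1) by (rule mult_left_mono)
    moreover have "(1 - r)^2 > 0" using assms(2) by simp
    ultimately show ?thesis by (simp add: power2_eq_square algebra_simps)
  qed
  have e: "1 + r^2 - 2*r*c = (1 - r)^2 + 2 * r * (1 - c)" by algebra
  have nn: "(1 - r)^2 + 2 * r * (1 - c) \<ge> 0" using assms by simp
  have E1: "(1 + r^2) * Re v + 2*r - c * (1 + 2*r*Re v + r^2) = Re v * ((1 - r)^2 + 2 * r * (1 - c)) + 2*r - c*(1+r^2)"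
    by algebra
  have E2: "Re v * ((1 - r)^2 + 2 * r * (1 - c)) \<ge> (1 - \<delta>) * ((1 - r)^2 + 2 * r * (1 - c))"
    using mult_right_mono[OF assms(4) nn] .
  have E3: "(1 - \<delta>) * ((1 - r)^2 + 2 * r * (1 - c)) + 2*r - c*(1+r^2) = (1 - c) * (1 + r)^2 - \<delta> * ((1 - r)^2 + 2 * r * (1 - c))"
    by algebra
  have "c * (1 + 2*r*Re v + r^2) \<le> (1 + r^2) * Re v + 2*r" using E1 E2 E3 key by linarith
  then have "c \<le> ((1 + r^2) * Re v + 2*r) / (1 + 2*r*Re v + r^2)"
    using D by (subst pos_le_divide_eq) auto
  then show ?thesis by (subst mob_Re[OF assms(1-3)])
qed

lemma arc_point:
  fixes u :: complex and h :: real
  assumes "norm u = 1" "Re u \<ge> cos h" "0 \<le> h" "h \<le> pi"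
  shows "\<exists>\<theta>. \<bar>\<theta>\<bar> \<le> h \<and> u = exp (\<i> * of_real \<theta>)"
proof (intro exI conjI)
  have u0: "u \<noteq> 0" using assms(1) by auto
  have "cos \<bar>Arg u\<bar> = Re u" using cos_Arg[OF u0] assms(1) by simp
  then have "cos h \<le> cos \<bar>Arg u\<bar>" using assms by simp
  moreover have "\<bar>Arg u\<bar> \<le> pi" using Arg_bounded[of u] by auto
  ultimately show "\<bar>Arg u\<bar> \<le> h" using cos_mono_le_eq[of h "\<bar>Arg u\<bar>"] assms by simp
  have "cis (Arg u) = u" using cis_Arg[OF u0] assms(1) by (simp add: sgn_div_norm)
  then show "u = exp (\<i> * of_real (Arg u))" by (simp add: cis_conv_exp)
qed

lemma rotation:
  fixes w :: complex and N :: nat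
  assumes "N \<ge> 1" "norm w = 1"
  shows "\<exists>k<N. Re (exp (of_real (2 * pi * real k / real N) * \<i>) * w) \<ge> cos (pi / real N)"
proof -
  define t where "t = Arg w"
  have w0: "w \<noteq> 0" using assms by auto
  have wt: "w = exp (\<i> * of_real t)"
    using cis_Arg[OF w0] assms(2) unfolding t_def by (simp add: sgn_div_norm cis_conv_exp)
  define x where "x = - t * real N / (2 * pi)"
  define k0 where "k0 = \<lfloor>x + 1/2\<rfloor>"
  have k0x: "\<bar>real_of_int k0 - x\<bar> \<le> 1/2" unfolding k0_def by linarith
  define q where "q = k0 div int N"
  define k where "k = nat (k0 mod int N)"
  have Npos: "int N > 0" using assms by simp
  have kN: "k < N" unfolding k_def using Npos by (simp add: nat_less_iff)
  have kq: "k0 = int N * q + int k" unfolding k_def q_def using Npos by simp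
  define y where "y = 2 * pi * (real_of_int k0 - x) / real N"
  have ang: "2 * pi * real k / real N + t = y + (2*pi) * real_of_int (- q)"
  proof -
    have "real_of_int k0 = real N * real_of_int q + real k" using kq by (simp add: of_int_add)
    then have "real k = real_of_int k0 - real N * real_of_int q" by simp
    then have "2 * pi * real k / real N = 2 * pi * (real_of_int k0 - real N * real_of_int q) / real N"
      by simp
    also have "\<dots> = 2 * pi * real_of_int k0 / real N - 2 * pi * real_of_int q"
      using assms(1) by (simp add: right_diff_distrib diff_divide_distrib)
    finally have "2 * pi * real k / real N = 2 * pi * real_of_int k0 / real N - 2 * pi * real_of_int q" .
    moreover have "t = - 2 * pi * x / real N" unfolding x_def using assms(1) by (simp add: field_simps)
    moreover have "y = 2 * pi * real_of_int k0 / real N - 2 * pi * x / real N"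
      unfolding y_def by (simp add: right_diff_distrib diff_divide_distrib)
    ultimately show ?thesis by simp
  qed
  have "exp (of_real (2 * pi * real k / real N) * \<i>) * w = exp (\<i> * of_real (2 * pi * real k / real N + t))"
    by (simp add: wt exp_add[symmetric] algebra_simps)
  then have "Re (exp (of_real (2 * pi * real k / real N) * \<i>) * w) = cos (2 * pi * real k / real N + t)"
    by (simp add: Re_exp)
  also have "\<dots> = cos y" unfolding ang by (simp add: cos_add sin_int_2pin cos_int_2pin del: of_int_minus)
  also have "cos y = cos \<bar>y\<bar>" by simp
  also have "cos \<bar>y\<bar> \<ge> cos (pi / real N)"
  proof -
    have "\<bar>y\<bar> = 2 * pi * \<bar>real_of_int k0 - x\<bar> / real N" unfolding y_def by (simp add: abs_mult abs_divide)
    also have "\<dots> \<le> 2 * pi * (1/2) / real N" using k0x assms(1)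
      by (intro divide_right_mono mult_left_mono) auto
    finally have yb: "\<bar>y\<bar> \<le> pi / real N" by simp
    have "pi / real N \<le> pi" using assms(1) by (simp add: divide_le_eq)
    then show ?thesis using yb by (subst cos_mono_le_eq) auto
  qed
  finally show ?thesis using kN by blast
qed

lemma key:
  fixes p :: "complex poly" and r h E P :: real and N :: nat
  assumes r: "0 \<le> r" "r < 1" and N: "N \<ge> 1" and h: "0 \<le> h" "h \<le> pi"
    and cover: "\<And>v. norm v = 1 \<Longrightarrow> Re v \<ge> cos (pi / real N) \<Longrightarrow> Re ((v + of_real r)/(1 + of_real r * v)) \<ge> cos h"
    and bnd: "\<And>u. norm u = 1 \<Longrightarrow> norm (poly p u) \<le> P" and P: "P \<ge> 1"
    and small: "\<And>\<theta>. \<bar>\<theta>\<bar> \<le> h \<Longrightarrow> norm (poly p (exp (\<i> * of_real \<theta>))) \<le> E"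
  shows "norm (poly p (of_real r)) ^ N \<le> E * P ^ (N - 1)"
proof -
  define c where "c k = exp (of_real (2 * pi * real k / real N) * \<i>)" for k :: nat
  have nc: "norm (c k) = 1" for k unfolding c_def by simp
  define f where "f w = (\<Prod>k<N. poly p ((c k * w + of_real r) / (1 + of_real r * (c k * w))))" for w
  have hol: "f holomorphic_on cball 0 1"
    unfolding f_def
  proof (intro holomorphic_intros)
    fix k w assume "w \<in> cball (0::complex) 1"
    then have "norm (c k * w) \<le> 1" by (simp add: norm_mult nc)
    then show "1 + of_real r * (c k * w) \<noteq> 0" using denom_nz r by blast
  qed
  have fr: "norm (f z) \<le> E * P ^ (N - 1)" if z: "z \<in> frontier (ball 0 1)" for z
  proof -
    have nz: "norm z = 1" using z by simp
    obtain k0 where k0: "k0 < N" "Re (c k0 * z) \<ge> cos (pi / real N)"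
      using rotation[OF N nz] unfolding c_def by blast
    define g where "g k = poly p ((c k * z + of_real r) / (1 + of_real r * (c k * z)))" for k
    have nv: "norm (c k * z) = 1" for k by (simp add: norm_mult nc nz)
    have gP: "norm (g k) \<le> P" for k unfolding g_def by (rule bnd, rule mob_norm[OF r nv])
    have "Re ((c k0 * z + of_real r) / (1 + of_real r * (c k0 * z))) \<ge> cos h"
      using cover[OF nv k0(2)] .
    then obtain \<theta> where th: "\<bar>\<theta>\<bar> \<le> h" "(c k0 * z + of_real r) / (1 + of_real r * (c k0 * z)) = exp (\<i> * of_real \<theta>)"
      using arc_point[OF mob_norm[OF r nv] _ h] by blast
    have gE: "norm (g k0) \<le> E" unfolding g_def th(2) using small[OF th(1)] .
    have "norm (f z) = (\<Prod>k<N. norm (g k))" unfolding f_def g_def by (simp add: prod_norm)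
    also have "\<dots> = norm (g k0) * (\<Prod>k\<in>{..<N} - {k0}. norm (g k))"
      using k0(1) by (subst prod.remove[of _ k0]) auto
    also have "\<dots> \<le> E * P ^ (N - 1)"
    proof (rule mult_mono)
      show "(\<Prod>k\<in>{..<N} - {k0}. norm (g k)) \<le> P ^ (N - 1)"
        by (rule prod_le_power) (use gP P k0(1) in auto)
      show "0 \<le> E" using gE norm_ge_zero order_trans by blast
    qed (use gE in \<open>auto intro: prod_nonneg\<close>)
    finally show ?thesis .
  qed
  have "norm (f 0) \<le> E * P ^ (N - 1)"
  proof (rule maximum_modulus_frontier[of f "ball 0 1"])
    show "f holomorphic_on interior (ball 0 1)" using hol by (rule holomorphic_on_subset) auto
    show "continuous_on (closure (ball 0 1)) f" using holomorphic_on_imp_continuous_on[OF hol] by simp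
  qed (use fr in auto)
  moreover have "f 0 = poly p (of_real r) ^ N" unfolding f_def by simp
  ultimately show ?thesis by (simp add: norm_power)
qed

lemma Pn_poly:
  assumes "p \<in> Pn n"
  obtains d \<sigma> c where "1 \<le> d" "\<sigma> \<in> {0,1}" "\<forall>j. cmod (c j) \<le> 1"
    "\<And>x. poly p x = 1 - of_nat \<sigma> * x ^ d + (\<Sum>j\<in>{j. real n powr (1/5) \<le> real j \<and> j \<le> n}. c j * x ^ j)"
proof -
  from assms obtain d \<sigma> c where h: "1 \<le> d" "\<sigma> \<in> {0,1}" "\<forall>j. cmod (c j) \<le> 1"
    "p = 1 - monom (of_nat \<sigma>) d + (\<Sum>j\<in>{j. real n powr (1/5) \<le> real j \<and> j \<le> n}. monom (c j) j)"
    unfolding Pn_def by blast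
  show ?thesis
    by (rule that[OF h(1-3)]) (simp add: h(4) poly_sum poly_monom)
qed

lemma S_sub: "{j. real n powr (1/5) \<le> real j \<and> j \<le> n} \<subseteq> {..n}" by auto

lemma S_fin: "finite {j. real n powr (1/5) \<le> real j \<and> j \<le> n}"
  using finite_subset[OF S_sub] by blast

lemma S_card: "card {j. real n powr (1/5) \<le> real j \<and> j \<le> n} \<le> n + 1"
  using card_mono[OF _ S_sub] by fastforce

lemma Pn_bound:
  assumes "p \<in> Pn n" "norm u \<le> 1"
  shows "norm (poly p u) \<le> real n + 3"
proof -
  obtain d \<sigma> c where h: "1 \<le> d" "\<sigma> \<in> {0,1}" "\<forall>j. cmod (c j) \<le> 1"
    "\<And>x. poly p x = 1 - of_nat \<sigma> * x ^ d + (\<Sum>j\<in>{j. real n powr (1/5) \<le> real j \<and> j \<le> n}. c j * x ^ j)"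
    using Pn_poly[OF assms(1)] by blast
  let ?S = "{j. real n powr (1/5) \<le> real j \<and> j \<le> n}"
  have un: "norm (u ^ k) \<le> 1" for k using assms(2) by (simp add: norm_power power_le_one)
  have "norm (\<Sum>j\<in>?S. c j * u ^ j) \<le> (\<Sum>j\<in>?S. 1)"
  proof (rule sum_norm_le)
    fix j show "norm (c j * u ^ j) \<le> 1" using h(3) un[of j] by (simp add: norm_mult mult_le_one)
  qed
  also have "\<dots> \<le> real n + 1" using S_card[of n] by simp
  finally have T: "norm (\<Sum>j\<in>?S. c j * u ^ j) \<le> real n + 1" .
  have "norm (of_nat \<sigma> * u ^ d :: complex) \<le> 1" using h(2) un[of d] by (auto simp: norm_mult)
  then have "norm (1 - of_nat \<sigma> * u ^ d :: complex) \<le> 2"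
    by (smt (verit) norm_one norm_triangle_ineq4)
  then show ?thesis unfolding h(4) using T norm_triangle_ineq[of "1 - of_nat \<sigma> * u ^ d" "\<Sum>j\<in>?S. c j * u ^ j"]
    by linarith
qed

lemma Pn_r:
  fixes \<epsilon> :: real
  assumes "p \<in> Pn n" "0 < \<epsilon>" "\<epsilon> \<le> 1" and n1: "n \<ge> 1"
    and tail: "\<epsilon> = 1 \<or> (real n + 1) * exp (- \<epsilon> * real n powr (1/5)) \<le> \<epsilon> / 2"
  shows "norm (poly p (of_real (1 - \<epsilon>))) \<ge> \<epsilon> / 2"
proof -
  obtain d \<sigma> c where h: "1 \<le> d" "\<sigma> \<in> {0,1}" "\<forall>j. cmod (c j) \<le> 1"
    "\<And>x. poly p x = 1 - of_nat \<sigma> * x ^ d + (\<Sum>j\<in>{j. real n powr (1/5) \<le> real j \<and> j \<le> n}. c j * x ^ j)"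
    using Pn_poly[OF assms(1)] by blast
  let ?S = "{j. real n powr (1/5) \<le> real j \<and> j \<le> n}"
  define r where "r = 1 - \<epsilon>"
  have r: "0 \<le> r" "r \<le> 1" using assms unfolding r_def by auto
  have rj: "r ^ j \<le> exp (- \<epsilon> * real n powr (1/5))" if "j \<in> ?S" for j
  proof -
    have "r ^ j \<le> exp (- \<epsilon>) ^ j" using r exp_ge_add_one_self[of "-\<epsilon>"] unfolding r_def
      by (intro power_mono) auto
    also have "\<dots> = exp (- \<epsilon> * real j)" by (simp add: exp_of_nat_mult[symmetric] mult.commute)
    also have "\<dots> \<le> exp (- \<epsilon> * real n powr (1/5))" using that assms(2) by simp
    finally show ?thesis .
  qed
  have Tb: "norm (\<Sum>j\<in>?S. c j * of_real r ^ j) \<le> \<epsilon> / 2"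
  proof (cases "\<epsilon> = 1")
    case True
    then have "r = 0" unfolding r_def by simp
    moreover have "j \<noteq> 0" if "j \<in> ?S" for j
    proof
      assume "j = 0"
      with that have "real n powr (1/5) \<le> 0" by simp
      moreover have "real n powr (1/5) > 0" using n1 by simp
      ultimately show False by simp
    qed
    ultimately have "(\<Sum>j\<in>?S. c j * of_real r ^ j) = 0" by (intro sum.neutral) auto
    then show ?thesis using assms by simp
  next
    case False
    then have tl: "(real n + 1) * exp (- \<epsilon> * real n powr (1/5)) \<le> \<epsilon> / 2" using tail by simp
    have "norm (\<Sum>j\<in>?S. c j * of_real r ^ j) \<le> (\<Sum>j\<in>?S. exp (- \<epsilon> * real n powr (1/5)))"
    proof (rule sum_norm_le)
      fix j assume j: "j \<in> ?S"
      have "norm (c j) * r ^ j \<le> 1 * r ^ j" using h(3) r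
        by (intro mult_right_mono) auto
      then have "norm (c j * of_real r ^ j) \<le> 1 * r ^ j" using r
        by (simp add: norm_mult norm_power)
      then show "norm (c j * of_real r ^ j) \<le> exp (- \<epsilon> * real n powr (1/5))" using rj[OF j] by simp
    qed
    also have "\<dots> = card ?S * exp (- \<epsilon> * real n powr (1/5))" by simp
    also have "\<dots> \<le> (real n + 1) * exp (- \<epsilon> * real n powr (1/5))"
      using S_card[of n] by (intro mult_right_mono) auto
    finally show ?thesis using tl by linarith
  qed
  have M: "1 - of_nat \<sigma> * r ^ d \<ge> \<epsilon>"
  proof (cases "\<sigma> = 0")
    case True then show ?thesis using assms by simp
  next
    case False
    then have "\<sigma> = 1" using h(2) by auto
    moreover have "r ^ d \<le> r ^ 1" using power_decreasing[OF h(1) r] .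
    ultimately show ?thesis unfolding r_def by simp
  qed
  have EQ: "poly p (of_real r) = of_real (1 - of_nat \<sigma> * r ^ d) + (\<Sum>j\<in>?S. c j * of_real r ^ j)"
    unfolding h(4) by simp
  moreover have "norm (of_real (1 - of_nat \<sigma> * r ^ d) :: complex) \<ge> \<epsilon>"
  proof -
    have "norm (of_real (1 - of_nat \<sigma> * r ^ d) :: complex) = \<bar>1 - of_nat \<sigma> * r ^ d\<bar>" by (rule norm_of_real)
    then show ?thesis using M by linarith
  qed
  ultimately have "norm (poly p (of_real r)) \<ge> \<epsilon> - \<epsilon> / 2"
    unfolding EQ using Tb norm_diff_ineq[of "of_real (1 - of_nat \<sigma> * r ^ d) :: complex" "(\<Sum>j\<in>?S. c j * of_real r ^ j)"]
    by linarith
  then show ?thesis unfolding r_def by simp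
qed

lemma one_minus_cos_le: "1 - cos (x::real) \<le> x^2 / 2"
proof -
  have c: "cos x = 1 - 2 * sin (x/2) ^ 2" using cos_double_sin[of "x/2"] by simp
  have "\<bar>sin (x/2)\<bar> \<le> \<bar>x/2\<bar>" by (rule abs_sin_x_le_abs_x)
  then have "sin (x/2) ^ 2 \<le> (x/2) ^ 2" by (metis abs_le_square_iff)
  then show ?thesis unfolding c by (simp add: power_divide)
qed

lemma one_minus_cos_ge:
  assumes "0 \<le> h" "h \<le> (1::real)"
  shows "h^2 / 8 \<le> 1 - cos h"
proof -
  define y where "y = h / 2"
  have y: "0 \<le> y" "y \<le> 1/2" using assms unfolding y_def by auto
  have "\<bar>sin y - (\<Sum>m<3. sin_coeff m * y ^ m)\<bar> \<le> inverse (fact 3) * \<bar>y\<bar> ^ 3"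
    by (rule Maclaurin_sin_bound)
  moreover have "(\<Sum>m<3. sin_coeff m * y ^ m) = y"
    by (simp add: eval_nat_numeral sin_coeff_def)
  ultimately have "sin y \<ge> y - y^3 / 6" using y by (simp add: eval_nat_numeral abs_if split: if_splits)
  moreover have "y^3 / 6 \<le> y / 2"
  proof -
    have "y^2 \<le> 1" using y by (simp add: power_le_one)
    then have "y * y^2 \<le> y * 3" using y by (intro mult_left_mono) auto
    then show ?thesis by (simp add: power3_eq_cube power2_eq_square)
  qed
  ultimately have s: "sin y \<ge> y / 2" by linarith
  then have "(y/2)^2 \<le> sin y ^ 2" using y by (intro power_mono) auto
  moreover have "cos h = 1 - 2 * sin y ^ 2" using cos_double_sin[of y] unfolding y_def by simp
  ultimately show ?thesis unfolding y_def by (simp add: power_divide)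
qed

lemma cover_cond:
  fixes h \<epsilon> :: real and N :: nat
  assumes "0 < h" "h \<le> 1" "h \<le> \<epsilon>" "\<epsilon> \<le> 1" "N \<ge> 1" "real N * h \<ge> 3 * pi * \<epsilon>"
  shows "(1 - cos (pi / real N)) * ((1 - (1 - \<epsilon>))^2 + 2 * (1 - \<epsilon>) * (1 - cos h)) \<le> (1 - cos h) * (1 + (1 - \<epsilon>))^2"
proof -
  define \<delta> where "\<delta> = 1 - cos (pi / real N)"
  define \<gamma> where "\<gamma> = 1 - cos h"
  have d0: "0 \<le> \<delta>" unfolding \<delta>_def by simp
  have d1: "\<delta> \<le> (pi / real N)^2 / 2" unfolding \<delta>_def by (rule one_minus_cos_le)
  have g1: "\<gamma> \<le> h^2 / 2" unfolding \<gamma>_def by (rule one_minus_cos_le)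
  have g2: "h^2 / 8 \<le> \<gamma>" unfolding \<gamma>_def using assms by (intro one_minus_cos_ge) auto
  have g0: "0 \<le> \<gamma>" unfolding \<gamma>_def by simp
  have e0: "0 < \<epsilon>" using assms by simp
  have B: "(1 - (1 - \<epsilon>))^2 + 2 * (1 - \<epsilon>) * \<gamma> \<le> 2 * \<epsilon>^2"
  proof -
    have "2 * (1 - \<epsilon>) * \<gamma> \<le> 2 * 1 * \<gamma>" using assms g0 e0 by (intro mult_right_mono) auto
    moreover have "h^2 \<le> \<epsilon>^2" using assms by (intro power_mono) auto
    ultimately show ?thesis using g1 by simp
  qed
  have B0: "0 \<le> (1 - (1 - \<epsilon>))^2 + 2 * (1 - \<epsilon>) * \<gamma>" using assms g0 by simp
  have "\<delta> * ((1 - (1 - \<epsilon>))^2 + 2 * (1 - \<epsilon>) * \<gamma>) \<le> ((pi / real N)^2 / 2) * (2 * \<epsilon>^2)"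
    using d0 d1 B B0 by (intro mult_mono) auto
  also have "\<dots> = (pi * \<epsilon>)^2 / (real N)^2" by (simp add: power_divide power_mult_distrib)
  also have "\<dots> \<le> h^2 / 8"
  proof -
    have "3 * pi * \<epsilon> \<ge> 0" using e0 by simp
    then have "(3 * pi * \<epsilon>)^2 \<le> (real N * h)^2" using assms(6) by (intro power_mono) auto
    then have "9 * (pi * \<epsilon>)^2 \<le> (real N)^2 * h^2" by (simp add: power_mult_distrib)
    then have "8 * (pi * \<epsilon>)^2 \<le> (real N)^2 * h^2" by (smt (verit) zero_le_power2)
    moreover have "(real N)^2 > 0" using assms by simp
    ultimately show ?thesis by (simp add: divide_simps mult.commute)
  qed
  also have "\<dots> \<le> \<gamma>" by (rule g2)
  also have "\<dots> \<le> \<gamma> * (1 + (1 - \<epsilon>))^2"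
  proof -
    have "1 \<le> (1 + (1 - \<epsilon>))^2" using assms by (simp add: one_le_power)
    then show ?thesis using g0 by (simp add: mult_le_cancel_left1)
  qed
  finally show ?thesis unfolding \<delta>_def \<gamma>_def .
qed

lemma ln2_ge_half: "ln (2::real) \<ge> 1/2"
proof -
  have "exp (1/2::real) ^ 2 = exp 1" by (simp add: exp_of_nat_mult[symmetric])
  also have "\<dots> < 4" using e_less_272 by simp
  finally have "exp (1/2::real) ^ 2 < 2 ^ 2" by simp
  then have "exp (1/2::real) < 2" by (rule power_less_imp_less_base) simp
  then show ?thesis by (subst ln_ge_iff) auto
qed

theorem theorem3:
  shows "\<exists>C::real. C > 0 \<and> (\<forall>n::nat. n \<ge> 2 \<longrightarrow> (\<forall>p\<in>Pn n.
     (\<exists>\<theta>::real. \<bar>\<theta>\<bar> \<le> real n powr (-2/5) \<and>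
        cmod (poly p (exp (\<i> * of_real \<theta>))) \<ge> exp (- C * real n powr (1/5) * (ln (real n)) ^ 5))))"
proof (rule exI[of _ 2000], intro conjI allI impI ballI)
  fix n :: nat and p assume n2: "n \<ge> 2" and p: "p \<in> Pn n"
  define m where "m = real n powr (1/5)"
  define L where "L = ln (real n)"
  define h where "h = real n powr (-2/5)"
  define E where "E = exp (- 2000 * m * L ^ 5)"
  have n1: "real n \<ge> 2" using n2 by simp
  have m1: "m \<ge> 1" unfolding m_def using n1 by (intro ge_one_powr_ge_zero) auto
  have mn: "m \<le> real n" unfolding m_def using powr_mono[of "1/5" 1 "real n"] n1 by simp
  have m2: "m^2 = real n powr (2/5)"
  proof -
    have "m^2 = m powr (real 2)" using m1 powr_realpow[of m 2] by linarith
    also have "\<dots> = real n powr (1/5 * real 2)" unfolding m_def by (rule powr_powr)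
    finally show ?thesis by simp
  qed
  have hm: "h = 1 / m^2"
  proof -
    have "real n powr (-2/5) = inverse (real n powr (2/5))" using powr_minus[of "real n" "2/5"] by simp
    then show ?thesis unfolding h_def m2 by (simp add: inverse_eq_divide)
  qed
  have L2: "L \<ge> 1/2" unfolding L_def using ln2_ge_half n1 by (smt (verit) ln_le_cancel_iff)
  have h0: "0 < h" and h1: "h \<le> 1" unfolding hm using m1 by (auto simp: one_le_power)
  define \<epsilon> where "\<epsilon> = min 1 (3 * L / m)"
  have e0: "0 < \<epsilon>" and e1: "\<epsilon> \<le> 1" and e3: "\<epsilon> \<le> 3 * L / m" unfolding \<epsilon>_def using L2 m1 by auto
  have em: "\<epsilon> \<ge> 1 / m" unfolding \<epsilon>_def using L2 m1 by (auto simp: divide_right_mono)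
  have he: "h \<le> \<epsilon>"
  proof -
    have "1 / m^2 \<le> 1 / m" using m1 by (simp add: divide_simps power2_eq_square)
    then show ?thesis using em hm by simp
  qed
  have tail: "\<epsilon> = 1 \<or> (real n + 1) * exp (- \<epsilon> * real n powr (1/5)) \<le> \<epsilon> / 2"
  proof (cases "3 * L / m < 1")
    case False then show ?thesis unfolding \<epsilon>_def by simp
  next
    case True
    then have ee: "\<epsilon> = 3 * L / m" unfolding \<epsilon>_def by simp
    have "exp (- \<epsilon> * real n powr (1/5)) = exp (- (3 * L))" unfolding ee m_def[symmetric] using m1 by simp
    also have "\<dots> = 1 / real n ^ 3"
    proof -
      have "exp (of_nat 3 * L) = exp L ^ 3" by (rule exp_of_nat_mult)
      then have "exp (3 * L) = real n ^ 3" using n1 unfolding L_def by simp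
      then show ?thesis by (simp add: exp_minus inverse_eq_divide)
    qed
    finally have ex: "exp (- \<epsilon> * real n powr (1/5)) = 1 / real n ^ 3" .
    have "(real n + 1) / real n ^ 3 \<le> 3 / (4 * real n)"
    proof -
      have "4 * (real n + 1) * real n \<le> 3 * real n ^ 3"
      proof -
        have "(3 * real n + 2) * (real n - 2) \<ge> 0" using n1 by (intro mult_nonneg_nonneg) auto
        then have A: "4 * (real n + 1) \<le> 3 * real n ^ 2" by (simp add: algebra_simps power2_eq_square)
        have "4 * (real n + 1) * real n \<le> 3 * real n ^ 2 * real n" using mult_right_mono[OF A] n1 by simp
        then show ?thesis by (simp add: power2_eq_square power3_eq_cube)
      qed
      then show ?thesis using n1 by (simp add: divide_simps) (simp add: algebra_simps)
    qed
    also have "\<dots> \<le> \<epsilon> / 2"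
    proof -
      have "3 / (4 * real n) \<le> 3 / (4 * m)" using mn m1 by (intro divide_left_mono) auto
      also have "\<dots> \<le> (3 * L / m) / 2" using L2 m1 by (simp add: divide_simps)
      finally show ?thesis unfolding ee .
    qed
    finally have F: "(real n + 1) / real n ^ 3 \<le> \<epsilon> / 2" .
    have "(real n + 1) * exp (- \<epsilon> * real n powr (1/5)) = (real n + 1) / real n ^ 3" unfolding ex by simp
    then show ?thesis using F by simp
  qed
  define r where "r = 1 - \<epsilon>"
  have r: "0 \<le> r" "r < 1" unfolding r_def using e0 e1 by auto
  define N where "N = nat \<lceil>3 * pi * \<epsilon> * m^2\<rceil>"
  have Nge: "real N \<ge> 3 * pi * \<epsilon> * m^2" unfolding N_def by linarith
  have Nle: "real N \<le> 3 * pi * \<epsilon> * m^2 + 1" unfolding N_def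
  proof -
    have "0 \<le> 3 * pi * \<epsilon> * m^2" using e0 by simp
    then show "real (nat \<lceil>3 * pi * \<epsilon> * m^2\<rceil>) \<le> 3 * pi * \<epsilon> * m^2 + 1" by linarith
  qed
  have N1: "N \<ge> 1"
  proof -
    have "0 < 3 * pi * \<epsilon> * m^2" using e0 m1 by simp
    then show ?thesis unfolding N_def by linarith
  qed
  have Nh: "real N * h \<ge> 3 * pi * \<epsilon>"
  proof -
    have "real N * h \<ge> 3 * pi * \<epsilon> * m^2 * h" using Nge h0 by (intro mult_right_mono) auto
    moreover have "3 * pi * \<epsilon> * m^2 * h = 3 * pi * \<epsilon>" unfolding hm using m1 by simp
    ultimately show ?thesis by simp
  qed
  have cov: "Re ((v + of_real r)/(1 + of_real r * v)) \<ge> cos h"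
    if "norm v = 1" "Re v \<ge> cos (pi / real N)" for v
  proof (rule mob_cover[OF r that(1), of "1 - cos (pi / real N)"])
    show "1 - (1 - cos (pi / real N)) \<le> Re v" using that by simp
    show "(1 - cos (pi / real N)) * ((1 - r)\<^sup>2 + 2 * r * (1 - cos h)) \<le> (1 - cos h) * (1 + r)\<^sup>2"
      unfolding r_def by (rule cover_cond[OF h0 h1 he e1 N1 Nh])
  qed auto
  show "\<exists>\<theta>. \<bar>\<theta>\<bar> \<le> real n powr (-2/5) \<and> cmod (poly p (exp (\<i> * of_real \<theta>))) \<ge> exp (- 2000 * real n powr (1/5) * (ln (real n)) ^ 5)"
  proof (rule ccontr)
    assume neg: "\<not> ?thesis"
    have sm: "norm (poly p (exp (\<i> * of_real \<theta>))) \<le> E" if "\<bar>\<theta>\<bar> \<le> h" for \<theta>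
    proof -
      from neg that have "\<not> (E \<le> norm (poly p (exp (\<i> * of_real \<theta>))))"
        unfolding h_def E_def m_def L_def by blast
      then show ?thesis by simp
    qed
    define P where "P = real n + 3"
    have P1: "P > 1" unfolding P_def by simp
    have K: "norm (poly p (of_real r)) ^ N \<le> E * P ^ (N - 1)"
    proof (rule key[OF r N1 _ _ cov _ _ sm])
      show "0 \<le> h" using h0 by simp
      show "h \<le> pi" using h1 pi_gt3 by simp
      show "\<And>u. cmod u = 1 \<Longrightarrow> cmod (poly p u) \<le> P" unfolding P_def using Pn_bound[OF p] by simp
      show "1 \<le> P" using P1 by simp
    qed auto
    have lo: "(\<epsilon> / 2) ^ N \<le> norm (poly p (of_real r)) ^ N"
      using Pn_r[OF p e0 e1 _ tail] n2 e0 unfolding r_def by (intro power_mono) auto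
    have E0: "E > 0" unfolding E_def by simp
    have "E * P ^ (N - 1) < E * P ^ N"
    proof -
      have "P ^ (N - 1) < P ^ N" using P1 N1 by (intro power_strict_increasing) auto
      then show ?thesis using E0 by simp
    qed
    also have "E * P ^ N \<le> (\<epsilon> / 2) ^ N"
    proof -
      define Q where "Q = 2 * P / \<epsilon>"
      have Q1: "Q \<ge> 1" unfolding Q_def using P1 e0 e1 by (simp add: divide_simps)
      have Qn: "Q \<le> real n ^ 5"
      proof -
        have "1 / \<epsilon> \<le> m" using em m1 e0 by (simp add: divide_simps mult.commute)
        then have "Q \<le> 2 * P * m" unfolding Q_def using P1 by (simp add: divide_simps)
        also have "\<dots> \<le> 2 * P * real n" using mn P1 by simp
        also have "\<dots> \<le> real n ^ 5"
        proof -
          have "2 * (real n + 3) \<le> real n ^ 4"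
          proof -
            have a: "real n ^ 2 \<ge> 4" using n1 power_mono[of 2 "real n" 2] by simp
            have b: "real n ^ 4 = real n ^ 2 * real n ^ 2" by (simp add: power_add[symmetric])
            have c: "real n ^ 2 * real n ^ 2 \<ge> 4 * real n ^ 2" using mult_right_mono[OF a, of "real n ^ 2"] by simp
            have d: "real n ^ 2 \<ge> 2 * real n" using n1 by (simp add: power2_eq_square)
            have e: "real n ^ 4 \<ge> 4 * real n ^ 2" using b c by simp
            have f: "2 * (real n + 3) \<le> 8 * real n" using n1 by simp
            have g: "8 * real n \<le> 4 * real n ^ 2" using d by simp
            show ?thesis using order_trans[OF f order_trans[OF g e]] .
          qed
          then have "2 * (real n + 3) * real n \<le> real n ^ 4 * real n" using n1 by (intro mult_right_mono) auto
          moreover have "real n ^ 4 * real n = real n ^ 5" by (simp add: eval_nat_numeral)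
          ultimately show ?thesis unfolding P_def by (simp add: mult.assoc)
        qed
        finally show ?thesis .
      qed
      have lnQ: "ln Q \<le> 5 * L" and lnQ0: "0 \<le> ln Q"
      proof -
        have "ln Q \<le> ln (real n ^ 5)" using Qn Q1 n1 by (subst ln_le_cancel_iff) auto
        then show "ln Q \<le> 5 * L" unfolding L_def using n1 by (simp add: ln_realpow)
        show "0 \<le> ln Q" using Q1 by simp
      qed
      have NL: "real N \<le> 40 * L * m"
      proof -
        have "3 * pi * \<epsilon> * m^2 \<le> 3 * pi * (3 * L / m) * m^2" using e3 m1 by (intro mult_right_mono mult_left_mono) auto
        also have "\<dots> = 9 * pi * L * m" using m1 by (simp add: power2_eq_square)
        finally have "3 * pi * \<epsilon> * m^2 \<le> 9 * pi * L * m" .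
        then have "real N \<le> 9 * pi * L * m + 1" using Nle by linarith
        moreover have "1 \<le> 2 * L * m"
        proof -
          have "1 * 1 \<le> (2 * L) * m" using L2 m1 by (intro mult_mono) auto
          then show ?thesis by simp
        qed
        moreover have "9 * pi * L * m \<le> 38 * L * m" using pi_less_4 L2 m1 by (intro mult_right_mono) auto
        ultimately show ?thesis by linarith
      qed
      have "real N * ln Q \<le> (40 * L * m) * (5 * L)" using NL lnQ lnQ0 L2 m1 by (intro mult_mono) auto
      also have "\<dots> = 200 * m * L^2" by (simp add: power2_eq_square)
      also have "\<dots> \<le> 2000 * m * L^5"
      proof -
        have "L^3 \<ge> (1/2)^3" using L2 by (intro power_mono) auto
        have p5: "L^5 = L^2 * L^3" by (simp add: power_add[symmetric])
        have "L^2 * (1/2)^3 \<le> L^2 * L^3" using mult_left_mono[OF \<open>L^3 \<ge> (1/2)^3\<close>, of "L^2"] by simp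
        then have "L^2 \<le> 10 * L^5" unfolding p5 by (simp add: power_divide) (smt (verit) zero_le_power2)
        then show ?thesis using m1 by simp
      qed
      finally have NQ: "real N * ln Q \<le> 2000 * m * L^5" .
      have "E \<le> exp (- (real N * ln Q))" unfolding E_def using NQ by simp
      also have "\<dots> = (1 / Q) ^ N"
      proof -
        have "exp (real N * ln Q) = Q ^ N" using exp_of_nat_mult[of N "ln Q"] Q1 by simp
        then show ?thesis by (simp add: exp_minus inverse_eq_divide power_one_over)
      qed
      finally have "E \<le> (1/Q) ^ N" .
      then have "E * P ^ N \<le> (1/Q) ^ N * P ^ N" using P1 by (intro mult_right_mono) auto
      also have "\<dots> = (\<epsilon> / 2) ^ N"
      proof -
        have "1/Q * P = \<epsilon>/2" unfolding Q_def using P1 e0 by (simp add: field_simps)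
        then show ?thesis by (metis power_mult_distrib)
      qed
      finally show ?thesis .
    qed
    finally show False using K lo by linarith
  qed
qed simp

end
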